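(* Assume the vertex degrees of $G$ are uniformly bounded, let $\theta\in(0,1)$, and let $\rho=\lim_nR_n^{1/n}$. For every $\varepsilon>0$ there is $N$ such that for all $n\ge N$ and all $f\in\mathrm{Lip}_\theta$: $$\|\mathcal T^nf-\mathcal T^n\Pi_nf\|_\infty\le(\rho+\varepsilon)^n\theta^n\,\mathrm L_1(f),\qquad \|\mathcal T^nf-\mathcal T^n\Pi_nf\|_\theta\le(\rho+\varepsilon)^n\theta^n\,\mathrm L_1(f).$$
   Context: $G$ is a connected, locally finite graph (no loops, no multiple edges, every vertex of degree $\ge2$). $E$ oriented edges with $\iota,\tau$, opposite $\bar e$; turn $e\rightsquigarrow e'$ iff $\tau(e)=\iota(e')$, $e'\ne\bar e$. $P$ = infinite paths $(e_1,e_2,\dots)$ with $e_i\rightsquigarrow e_{i+1}$; $(\mathcal Tf)(e_1,\dots)=\sum_{e_0\rightsquigarrow e_1}f(e_0,e_1,\dots)$. $R_n=\sup_{e}\#\{(e_{-n},\dots,e_0): e_i\rightsquigarrow e_{i+1},\ e_0=e\}$. A postal code of length $m$ is a finite path $c=(c_1,\dots,c_m)$ with $c_i\rightsquigarrow c_{i+1}$; its district $P_c$ is the set of $p\in P$ beginning with $c$. For each $m$ and each postal code $c$ of length $m$ a point $p_c\in P_c$ is fixed, and $\Pi_m f$ is the function with $(\Pi_mf)(p)=f(p_c)$, $c$ the length-$m$ prefix of $p$. $d_\theta(p,p')=\theta^{k-1}$, $k=\min\{i:e_i\ne e'_i\}$; $\mathrm{Lip}_\theta$ = bounded $f$ uniformly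 $d_\theta$-Lipschitz on islands $\{p:\iota(e_1)=v\}$; $\mathrm L_1(f)$ = optimal Lipschitz constant over pairs with the same first edge; $\|f\|_\theta=\mathrm L_1(f)+\|f\|_\infty$. *)

theory Defs
  imports "HOL-Analysis.Analysis"
begin

text \<open>The graph G has vertex type 'v (all of UNIV) and a symmetric, irreflexive
adjacency relation adj.  Oriented edges are pairs (u,w) with adj u w;
iota e = fst e, tau e = snd e, the opposite edge of (u,w) is (w,u).
Infinite paths (e_1, e_2, ...) are encoded 0-indexed as p :: nat => 'v * 'v
(p 0 = e_1).\<close>

definition simple_graph :: "('v \<Rightarrow> 'v \<Rightarrow> bool) \<Rightarrow> bool" where
  "simple_graph adj \<longleftrightarrow> (\<forall>u w. adj u w \<longrightarrow> adj w u) \<and> (\<forall>u. \<not> adj u u)"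

definition connected_graph :: "('v \<Rightarrow> 'v \<Rightarrow> bool) \<Rightarrow> bool" where
  "connected_graph adj \<longleftrightarrow> (\<forall>u w. adj\<^sup>*\<^sup>* u w)"

definition locally_finite :: "('v \<Rightarrow> 'v \<Rightarrow> bool) \<Rightarrow> bool" where
  "locally_finite adj \<longleftrightarrow> (\<forall>v. finite {w. adj v w})"

definition min_degree_2 :: "('v \<Rightarrow> 'v \<Rightarrow> bool) \<Rightarrow> bool" where
  "min_degree_2 adj \<longleftrightarrow> (\<forall>v. card {w. adj v w} \<ge> 2)"

definition bounded_degree :: "('v \<Rightarrow> 'v \<Rightarrow> bool) \<Rightarrow> bool" where
  "bounded_degree adj \<longleftrightarrow> (\<exists>D::nat. \<forall>v. card {w. adj v w} \<le> D)"

definition is_edge :: "('v \<Rightarrow> 'v \<Rightarrow> bool) \<Rightarrow> 'v \<times> 'v \<Rightarrow> bool" where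
  "is_edge adj e \<longleftrightarrow> adj (fst e) (snd e)"

definition opp :: "'v \<times> 'v \<Rightarrow> 'v \<times> 'v" where
  "opp e = (snd e, fst e)"

definition turn :: "('v \<Rightarrow> 'v \<Rightarrow> bool) \<Rightarrow> 'v \<times> 'v \<Rightarrow> 'v \<times> 'v \<Rightarrow> bool" where
  "turn adj e e' \<longleftrightarrow> is_edge adj e \<and> is_edge adj e' \<and> snd e = fst e' \<and> e' \<noteq> opp e"

definition Paths :: "('v \<Rightarrow> 'v \<Rightarrow> bool) \<Rightarrow> (nat \<Rightarrow> 'v \<times> 'v) set" where
  "Paths adj = {p. (\<forall>i. is_edge adj (p i)) \<and> (\<forall>i. turn adj (p i) (p (Suc i)))}"

definition is_walk :: "('v \<Rightarrow> 'v \<Rightarrow> bool) \<Rightarrow> ('v \<times> 'v) list \<Rightarrow> bool" where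
  "is_walk adj c \<longleftrightarrow> (\<forall>x\<in>set c. is_edge adj x) \<and>
      (\<forall>i. Suc i < length c \<longrightarrow> turn adj (c ! i) (c ! Suc i))"

definition transfer ::
  "('v \<Rightarrow> 'v \<Rightarrow> bool) \<Rightarrow> ((nat \<Rightarrow> 'v \<times> 'v) \<Rightarrow> real) \<Rightarrow> (nat \<Rightarrow> 'v \<times> 'v) \<Rightarrow> real" where
  "transfer adj f p = (\<Sum>e\<in>{e. turn adj e (p 0)}. f (case_nat e p))"

text \<open>R_n = sup over edges e of the number of sequences (e_{-n},...,e_0) with
consecutive turns and e_0 = e (encoded as walks of length n+1 ending in e).\<close>
definition R :: "('v \<Rightarrow> 'v \<Rightarrow> bool) \<Rightarrow> nat \<Rightarrow> nat" where
  "R adj n = (SUP e\<in>{e. is_edge adj e}.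
      card {c. length c = Suc n \<and> is_walk adj c \<and> last c = e})"

definition prefix :: "nat \<Rightarrow> (nat \<Rightarrow> 'v \<times> 'v) \<Rightarrow> ('v \<times> 'v) list" where
  "prefix m p = map p [0..<m]"

definition valid_choice ::
  "('v \<Rightarrow> 'v \<Rightarrow> bool) \<Rightarrow> (('v \<times> 'v) list \<Rightarrow> (nat \<Rightarrow> 'v \<times> 'v)) \<Rightarrow> bool" where
  "valid_choice adj pc \<longleftrightarrow> (\<forall>c. is_walk adj c \<longrightarrow>
      pc c \<in> Paths adj \<and> prefix (length c) (pc c) = c)"

definition Pi_op ::
  "(('v \<times> 'v) list \<Rightarrow> (nat \<Rightarrow> 'v \<times> 'v)) \<Rightarrow> nat \<Rightarrow> ((nat \<Rightarrow> 'v \<times> 'v) \<Rightarrow> real)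
     \<Rightarrow> (nat \<Rightarrow> 'v \<times> 'v) \<Rightarrow> real" where
  "Pi_op pc m f p = f (pc (prefix m p))"

text \<open>d_theta(p,p') = theta^(k-1), k = min{i : e_i \<noteq> e'_i} (1-indexed); 0-indexed
this is theta^k with k the least index of disagreement; d(p,p) = 0.\<close>
definition dtheta :: "real \<Rightarrow> (nat \<Rightarrow> 'v \<times> 'v) \<Rightarrow> (nat \<Rightarrow> 'v \<times> 'v) \<Rightarrow> real" where
  "dtheta \<theta> p p' = (if p = p' then 0 else \<theta> ^ (LEAST i. p i \<noteq> p' i))"

definition Lip :: "('v \<Rightarrow> 'v \<Rightarrow> bool) \<Rightarrow> real \<Rightarrow> ((nat \<Rightarrow> 'v \<times> 'v) \<Rightarrow> real) set" where
  "Lip adj \<theta> = {f. (\<exists>B. \<forall>p\<in>Paths adj. \<bar>f p\<bar> \<le> B) \<and>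
      (\<exists>L. \<forall>p\<in>Paths adj. \<forall>p'\<in>Paths adj. fst (p 0) = fst (p' 0) \<longrightarrow>
            \<bar>f p - f p'\<bar> \<le> L * dtheta \<theta> p p')}"

definition L1 :: "('v \<Rightarrow> 'v \<Rightarrow> bool) \<Rightarrow> real \<Rightarrow> ((nat \<Rightarrow> 'v \<times> 'v) \<Rightarrow> real) \<Rightarrow> real" where
  "L1 adj \<theta> f = Sup ({\<bar>f p - f p'\<bar> / dtheta \<theta> p p' | p p'.
      p \<in> Paths adj \<and> p' \<in> Paths adj \<and> p 0 = p' 0 \<and> p \<noteq> p'} \<union> {0})"

definition supnorm :: "('v \<Rightarrow> 'v \<Rightarrow> bool) \<Rightarrow> ((nat \<Rightarrow> 'v \<times> 'v) \<Rightarrow> real) \<Rightarrow> real" where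
  "supnorm adj f = (SUP p\<in>Paths adj. \<bar>f p\<bar>)"

definition thetanorm :: "('v \<Rightarrow> 'v \<Rightarrow> bool) \<Rightarrow> real \<Rightarrow> ((nat \<Rightarrow> 'v \<times> 'v) \<Rightarrow> real) \<Rightarrow> real" where
  "thetanorm adj \<theta> f = L1 adj \<theta> f + supnorm adj f"

end

theory Submission
  imports Defs
begin

definition W where "W adj n e = {c. length c = Suc n \<and> is_walk adj c \<and> last c = e}"

lemma walk_snoc: "is_walk adj (c @ [e]) \<longleftrightarrow> is_walk adj c \<and> is_edge adj e \<and> (c \<noteq> [] \<longrightarrow> turn adj (last c) e)"
proof
  assume a: "is_walk adj (c @ [e])"
  have 1: "is_walk adj c" unfolding is_walk_def
  proof (intro conjI allI impI)
    show "\<forall>x\<in>set c. is_edge adj x" using a by (auto simp: is_walk_def)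
    fix i assume "Suc i < length c"
    thus "turn adj (c ! i) (c ! Suc i)" using a[unfolded is_walk_def] 
      by (metis Suc_lessD length_append_singleton less_SucI nth_append_left)
  qed
  have 2: "c \<noteq> [] \<longrightarrow> turn adj (last c) e"
  proof
    assume "c \<noteq> []"
    then obtain i where i: "length c = Suc i" by (cases c) auto
    have "turn adj ((c@[e]) ! i) ((c@[e]) ! Suc i)" using a[unfolded is_walk_def] i by simp
    thus "turn adj (last c) e" using i \<open>c \<noteq> []\<close> by (simp add: nth_append last_conv_nth)
  qed
  show "is_walk adj c \<and> is_edge adj e \<and> (c \<noteq> [] \<longrightarrow> turn adj (last c) e)"
    using 1 2 a by (auto simp: is_walk_def)
next
  assume a: "is_walk adj c \<and> is_edge adj e \<and> (c \<noteq> [] \<longrightarrow> turn adj (last c) e)"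
  show "is_walk adj (c @ [e])" unfolding is_walk_def
  proof (intro conjI allI impI)
    show "\<forall>x\<in>set (c@[e]). is_edge adj x" using a by (auto simp: is_walk_def)
    fix i assume i: "Suc i < length (c@[e])"
    show "turn adj ((c@[e]) ! i) ((c@[e]) ! Suc i)"
    proof (cases "Suc i < length c")
      case True thus ?thesis using a by (simp add: is_walk_def nth_append)
    next
      case False
      hence li: "Suc i = length c" using i by simp
      hence "c \<noteq> []" "i = length c - 1" by auto
      thus ?thesis using a li by (auto simp: nth_append last_conv_nth)
    qed
  qed
qed

fun cnt :: "('v \<Rightarrow> 'v \<Rightarrow> bool) \<Rightarrow> nat \<Rightarrow> 'v\<times>'v \<Rightarrow> real" where
  "cnt adj 0 e = 1"
| "cnt adj (Suc n) e = (\<Sum>e'\<in>{e'. turn adj e' e}. cnt adj n e')"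

lemma turn_sub: assumes "simple_graph adj"
  shows "{e'. turn adj e' e} \<subseteq> (\<lambda>u. (u, fst e)) ` {u. adj (fst e) u}"
  using assms by (force simp: turn_def is_edge_def simple_graph_def)

lemma turn_fin: assumes "simple_graph adj" "locally_finite adj"
  shows "finite {e'. turn adj e' e}"
proof -
  have "finite {u. adj (fst e) u}" using assms(2) by (simp add: locally_finite_def)
  thus ?thesis using turn_sub[OF assms(1)] by (meson finite_imageI finite_subset)
qed

lemma turn_card: assumes "simple_graph adj" "locally_finite adj" "\<forall>v. card {w. adj v w} \<le> D"
  shows "card {e'. turn adj e' e} \<le> D"
proof -
  have f: "finite {u. adj (fst e) u}" using assms(2) by (simp add: locally_finite_def)
  have "card {e'. turn adj e' e} \<le> card ((\<lambda>u. (u, fst e)) ` {u. adj (fst e) u})"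
    using turn_sub[OF assms(1)] f by (intro card_mono) auto
  also have "\<dots> \<le> card {u. adj (fst e) u}" by (rule card_image_le[OF f])
  also have "\<dots> \<le> D" using assms(3) by auto
  finally show ?thesis .
qed

lemma cnt_nonneg: "cnt adj n e \<ge> 0"
  by (induction n arbitrary: e) (auto intro: sum_nonneg)

lemma cnt_bound: assumes "simple_graph adj" "locally_finite adj" "\<forall>v. card {w. adj v w} \<le> D"
  shows "cnt adj n e \<le> real D ^ n"
proof (induction n arbitrary: e)
  case 0 thus ?case by simp
next
  case (Suc n)
  have "cnt adj (Suc n) e \<le> real (card {e'. turn adj e' e}) * real D ^ n"
    using Suc by (simp add: sum_bounded_above)
  also have "\<dots> \<le> real D * real D ^ n"
    using turn_card[OF assms] by (intro mult_right_mono) auto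
  finally show ?case by simp
qed

lemma W0: "is_edge adj e \<Longrightarrow> W adj 0 e = {[e]}"
  unfolding W_def
  apply (auto simp: is_walk_def length_Suc_conv)
  done

lemma WSuc: assumes "is_edge adj e"
  shows "W adj (Suc n) e = (\<Union>e'\<in>{e'. turn adj e' e}. (\<lambda>c. c @ [e]) ` W adj n e')"
proof (rule set_eqI, rule iffI)
  fix x assume x: "x \<in> W adj (Suc n) e"
  hence len: "length x = Suc (Suc n)" and w: "is_walk adj x" and l: "last x = e" by (auto simp: W_def)
  hence ne: "x \<noteq> []" by auto
  define c where "c = butlast x"
  have xc: "x = c @ [e]" using ne l unfolding c_def by (metis append_butlast_last_id)
  have cne: "c \<noteq> []" using len unfolding c_def by (cases x rule: rev_cases) auto
  have "is_walk adj c" "turn adj (last c) e" using w cne walk_snoc[of adj c e] xc by auto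
  moreover have "length c = Suc n" using len c_def by simp
  ultimately have "c \<in> W adj n (last c)" "turn adj (last c) e" by (auto simp: W_def)
  thus "x \<in> (\<Union>e'\<in>{e'. turn adj e' e}. (\<lambda>c. c @ [e]) ` W adj n e')"
    using xc by blast
next
  fix x assume "x \<in> (\<Union>e'\<in>{e'. turn adj e' e}. (\<lambda>c. c @ [e]) ` W adj n e')"
  then obtain e' c where t: "turn adj e' e" and c: "c \<in> W adj n e'" and xc: "x = c @ [e]" by auto
  have cne: "c \<noteq> []" using c by (auto simp: W_def)
  show "x \<in> W adj (Suc n) e" using c t cne assms walk_snoc[of adj c e] xc by (auto simp: W_def)
qed

lemma W_cnt: assumes "simple_graph adj" "locally_finite adj"
  shows "is_edge adj e \<Longrightarrow> finite (W adj n e) \<and> real (card (W adj n e)) = cnt adj n e"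
proof (induction n arbitrary: e)
  case 0 thus ?case by (simp add: W0)
next
  case (Suc n)
  have IH: "\<And>e'. turn adj e' e \<Longrightarrow> finite (W adj n e') \<and> real (card (W adj n e')) = cnt adj n e'"
    using Suc.IH by (simp add: turn_def)
  have fin: "finite {e'. turn adj e' e}" by (rule turn_fin[OF assms])
  have disj: "\<forall>i\<in>{e'. turn adj e' e}. \<forall>j\<in>{e'. turn adj e' e}. i \<noteq> j \<longrightarrow>
      (\<lambda>c. c @ [e]) ` W adj n i \<inter> (\<lambda>c. c @ [e]) ` W adj n j = {}"
    by (auto simp: W_def)
  have fi: "\<forall>i\<in>{e'. turn adj e' e}. finite ((\<lambda>c. c @ [e]) ` W adj n i)" using IH by auto
  have "card (W adj (Suc n) e) = (\<Sum>i\<in>{e'. turn adj e' e}. card ((\<lambda>c. c @ [e]) ` W adj n i))"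
    unfolding WSuc[OF Suc.prems] by (rule card_UN_disjoint[OF fin fi disj])
  also have "\<dots> = (\<Sum>i\<in>{e'. turn adj e' e}. card (W adj n i))"
    by (intro sum.cong refl card_image) (auto simp: inj_on_def)
  finally have "real (card (W adj (Suc n) e)) = (\<Sum>i\<in>{e'. turn adj e' e}. real (card (W adj n i)))"
    by simp
  also have "\<dots> = cnt adj (Suc n) e" using IH by simp
  finally show ?case using fin fi by (simp add: WSuc[OF Suc.prems])
qed

lemma cnt_le_R: assumes "simple_graph adj" "locally_finite adj" "bounded_degree adj" "is_edge adj e"
  shows "cnt adj n e \<le> real (R adj n)"
proof -
  obtain D where D: "\<forall>v. card {w. adj v w} \<le> D" using assms(3) by (auto simp: bounded_degree_def)
  have b: "bdd_above ((\<lambda>e. card (W adj n e)) ` {e. is_edge adj e})"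
  proof (rule bdd_aboveI2)
    fix x assume "x \<in> {e. is_edge adj e}"
    hence "real (card (W adj n x)) \<le> real D ^ n"
      using W_cnt[OF assms(1,2)] cnt_bound[OF assms(1,2) D] by simp
    thus "card (W adj n x) \<le> D ^ n" by (metis of_nat_le_iff of_nat_power)
  qed
  have "card (W adj n e) \<le> R adj n" unfolding R_def W_def[symmetric]
    by (rule cSUP_upper[OF _ b]) (use assms(4) in simp)
  hence "real (card (W adj n e)) \<le> real (R adj n)" by simp
  thus ?thesis using W_cnt[OF assms(1,2,4), of n] by simp
qed

lemma cons_path: "p \<in> Paths adj \<Longrightarrow> turn adj e (p 0) \<Longrightarrow> case_nat e p \<in> Paths adj"
proof -
  assume p: "p \<in> Paths adj" and t: "turn adj e (p 0)"
  have "\<forall>i. turn adj (case_nat e p i) (case_nat e p (Suc i))"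
  proof
    fix i show "turn adj (case_nat e p i) (case_nat e p (Suc i))"
      using p t by (cases i) (auto simp: Paths_def)
  qed
  moreover have "\<forall>i. is_edge adj (case_nat e p i)"
  proof
    fix i show "is_edge adj (case_nat e p i)"
      using p t by (cases i) (auto simp: Paths_def turn_def)
  qed
  ultimately show ?thesis by (simp add: Paths_def)
qed

lemma T_Suc: "(transfer adj ^^ Suc n) f p = (\<Sum>e\<in>{e. turn adj e (p 0)}. (transfer adj ^^ n) f (case_nat e p))"
  by (simp add: transfer_def)

lemma sum_diff_abs: "\<bar>(\<Sum>e\<in>A. (a e::real)) - (\<Sum>e\<in>A. b e)\<bar> \<le> (\<Sum>e\<in>A. \<bar>a e - b e\<bar>)"
  unfolding sum_subtractf[symmetric] by (rule sum_abs)

lemma lemC: assumes "p \<in> Paths adj" "\<forall>q\<in>Paths adj. \<bar>f q - g q\<bar> \<le> B"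
  shows "\<bar>(transfer adj ^^ n) f p - (transfer adj ^^ n) g p\<bar> \<le> cnt adj n (p 0) * B"
  using assms(1)
proof (induction n arbitrary: p)
  case 0 thus ?case using assms(2) by simp
next
  case (Suc n)
  have "\<bar>(transfer adj ^^ Suc n) f p - (transfer adj ^^ Suc n) g p\<bar>
     \<le> (\<Sum>e\<in>{e. turn adj e (p 0)}. \<bar>(transfer adj ^^ n) f (case_nat e p) - (transfer adj ^^ n) g (case_nat e p)\<bar>)"
    unfolding T_Suc by (rule sum_diff_abs)
  also have "\<dots> \<le> (\<Sum>e\<in>{e. turn adj e (p 0)}. cnt adj n e * B)"
  proof (rule sum_mono)
    fix e assume "e \<in> {e. turn adj e (p 0)}"
    hence "case_nat e p \<in> Paths adj" using cons_path[of p adj e] Suc.prems by auto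
    thus "\<bar>(transfer adj ^^ n) f (case_nat e p) - (transfer adj ^^ n) g (case_nat e p)\<bar> \<le> cnt adj n e * B"
      using Suc.IH by fastforce
  qed
  also have "\<dots> = cnt adj (Suc n) (p 0) * B" by (simp add: sum_distrib_right)
  finally show ?case .
qed

lemma lemB: assumes "p \<in> Paths adj" "p' \<in> Paths adj" "0 < k" "\<forall>i<k. p i = p' i"
  "\<forall>q\<in>Paths adj. \<forall>q'\<in>Paths adj. (\<forall>i<n+k. q i = q' i) \<longrightarrow> \<bar>h q - h q'\<bar> \<le> B"
  shows "\<bar>(transfer adj ^^ n) h p - (transfer adj ^^ n) h p'\<bar> \<le> cnt adj n (p 0) * B"
  using assms
proof (induction n arbitrary: p p' k)
  case 0
  have "\<bar>h p - h p'\<bar> \<le> B" using "0.prems"(1,2,4,5) by simp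
  thus ?case by simp
next
  case (Suc n)
  have p0: "p' 0 = p 0" using Suc.prems(3,4) by auto
  have "\<bar>(transfer adj ^^ Suc n) h p - (transfer adj ^^ Suc n) h p'\<bar>
     \<le> (\<Sum>e\<in>{e. turn adj e (p 0)}. \<bar>(transfer adj ^^ n) h (case_nat e p) - (transfer adj ^^ n) h (case_nat e p')\<bar>)"
    unfolding T_Suc p0 by (rule sum_diff_abs)
  also have "\<dots> \<le> (\<Sum>e\<in>{e. turn adj e (p 0)}. cnt adj n e * B)"
  proof (rule sum_mono)
    fix e assume "e \<in> {e. turn adj e (p 0)}"
    hence "case_nat e p \<in> Paths adj" "case_nat e p' \<in> Paths adj"
      using cons_path[of p adj e] cons_path[of p' adj e] Suc.prems(1,2) p0 by simp_all
    moreover have "\<forall>i<Suc k. case_nat e p i = case_nat e p' i"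
    proof (intro allI impI)
      fix i assume "i < Suc k" thus "case_nat e p i = case_nat e p' i"
        using Suc.prems(4) by (cases i) simp_all
    qed
    moreover have "\<forall>q\<in>Paths adj. \<forall>q'\<in>Paths adj. (\<forall>i<n+Suc k. q i = q' i) \<longrightarrow> \<bar>h q - h q'\<bar> \<le> B"
      using Suc.prems(5) by (metis add_Suc_right plus_nat.simps(2))
    ultimately show "\<bar>(transfer adj ^^ n) h (case_nat e p) - (transfer adj ^^ n) h (case_nat e p')\<bar> \<le> cnt adj n e * B"
      using Suc.IH[of "case_nat e p" "case_nat e p'" "Suc k"] by simp
  qed
  also have "\<dots> = cnt adj (Suc n) (p 0) * B" by (simp add: sum_distrib_right)
  finally show ?case .
qed

lemma dtheta_agree: assumes "0 < \<theta>" "\<theta> \<le> 1" "\<forall>i<m. q i = q' i"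
  shows "dtheta \<theta> q q' \<le> \<theta> ^ m"
proof (cases "q = q'")
  case True thus ?thesis using assms by (simp add: dtheta_def)
next
  case False
  then obtain j where "q j \<noteq> q' j" by auto
  hence "q (LEAST i. q i \<noteq> q' i) \<noteq> q' (LEAST i. q i \<noteq> q' i)" by (rule LeastI)
  hence "m \<le> (LEAST i. q i \<noteq> q' i)" using assms(3) by (meson not_le)
  hence "\<theta> ^ (LEAST i. q i \<noteq> q' i) \<le> \<theta> ^ m" using assms by (intro power_decreasing) auto
  thus ?thesis using False by (simp add: dtheta_def)
qed

lemma dtheta_pos: "0 < \<theta> \<Longrightarrow> q \<noteq> q' \<Longrightarrow> 0 < dtheta \<theta> q q'"
  by (simp add: dtheta_def)

lemma L1_bdd: assumes "f \<in> Lip adj \<theta>" "0 < \<theta>"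
  shows "bdd_above ({\<bar>f p - f p'\<bar> / dtheta \<theta> p p' | p p'.
      p \<in> Paths adj \<and> p' \<in> Paths adj \<and> p 0 = p' 0 \<and> p \<noteq> p'} \<union> {0})"
proof -
  obtain L where L: "\<forall>p\<in>Paths adj. \<forall>p'\<in>Paths adj. fst (p 0) = fst (p' 0) \<longrightarrow>
            \<bar>f p - f p'\<bar> \<le> L * dtheta \<theta> p p'" using assms(1) by (auto simp: Lip_def)
  show ?thesis
  proof (rule bdd_aboveI)
    fix x assume "x \<in> {\<bar>f p - f p'\<bar> / dtheta \<theta> p p' | p p'.
      p \<in> Paths adj \<and> p' \<in> Paths adj \<and> p 0 = p' 0 \<and> p \<noteq> p'} \<union> {0}"
    then consider "x = 0" | p p' where "x = \<bar>f p - f p'\<bar> / dtheta \<theta> p p'"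
       "p \<in> Paths adj" "p' \<in> Paths adj" "p 0 = p' 0" "p \<noteq> p'" by blast
    thus "x \<le> max L 0"
    proof cases
      case 1 thus ?thesis by simp
    next
      case 2
      have d: "0 < dtheta \<theta> p p'" using dtheta_pos[OF assms(2) 2(5)] .
      have "\<bar>f p - f p'\<bar> \<le> L * dtheta \<theta> p p'" using L 2 by auto
      hence "x \<le> L" using d 2(1) by (simp add: pos_divide_le_eq)
      thus ?thesis by simp
    qed
  qed
qed

lemma L1_nonneg: "f \<in> Lip adj \<theta> \<Longrightarrow> 0 < \<theta> \<Longrightarrow> 0 \<le> L1 adj \<theta> f"
  unfolding L1_def by (rule cSup_upper[OF _ L1_bdd]) auto

lemma L1_use: assumes "f \<in> Lip adj \<theta>" "0 < \<theta>" "q \<in> Paths adj" "q' \<in> Paths adj" "q 0 = q' 0"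
  shows "\<bar>f q - f q'\<bar> \<le> L1 adj \<theta> f * dtheta \<theta> q q'"
proof (cases "q = q'")
  case True thus ?thesis by (simp add: dtheta_def)
next
  case False
  have d: "0 < dtheta \<theta> q q'" using dtheta_pos[OF assms(2) False] .
  have "\<bar>f q - f q'\<bar> / dtheta \<theta> q q' \<le> L1 adj \<theta> f"
    unfolding L1_def by (rule cSup_upper[OF _ L1_bdd[OF assms(1,2)]]) (use assms False in blast)
  thus ?thesis using d by (simp add: pos_divide_le_eq)
qed

lemma Paths_ne: assumes "min_degree_2 adj" shows "Paths adj \<noteq> {}"
proof -
  have other: "\<exists>w. adj v w \<and> w \<noteq> u" for v u
  proof (rule ccontr)
    assume "\<not> ?thesis"
    hence "{w. adj v w} \<subseteq> {u}" by auto
    hence "card {w. adj v w} \<le> card {u}" by (intro card_mono) auto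
    moreover have "card {w. adj v w} \<ge> 2" using assms by (simp add: min_degree_2_def)
    ultimately show False by simp
  qed
  have ext: "\<exists>e'. turn adj e e'" if "is_edge adj e" for e
  proof -
    obtain w where "adj (snd e) w" "w \<noteq> fst e" using other by blast
    thus ?thesis using that by (intro exI[of _ "(snd e, w)"]) (auto simp: turn_def is_edge_def opp_def)
  qed
  obtain w where "adj undefined w" using other by blast
  hence e0: "is_edge adj (undefined, w)" by (simp add: is_edge_def)
  define p where "p = rec_nat (undefined, w) (\<lambda>_ e. SOME e'. turn adj e e')"
  have ps: "p (Suc i) = (SOME e'. turn adj (p i) e')" for i by (simp add: p_def)
  have ed: "is_edge adj (p i)" for i
  proof (induction i)
    case 0 thus ?case using e0 by (simp add: p_def)
  next
    case (Suc i)
    have "turn adj (p i) (p (Suc i))" unfolding ps by (rule someI_ex[OF ext[OF Suc]])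
    thus ?case by (simp add: turn_def)
  qed
  have "turn adj (p i) (p (Suc i))" for i unfolding ps by (rule someI_ex[OF ext[OF ed]])
  hence "p \<in> Paths adj" using ed by (simp add: Paths_def)
  thus ?thesis by blast
qed

lemma lim_lemma: assumes "(\<lambda>n. root n (real (R adj n))) \<longlonglongrightarrow> \<rho>" "0 < \<epsilon>"
  shows "\<exists>N\<ge>1. \<forall>n\<ge>N. 2 * real (R adj n) \<le> (\<rho> + \<epsilon>) ^ n"
proof -
  have "(\<lambda>n. root n 2 * root n (real (R adj n))) \<longlonglongrightarrow> 1 * \<rho>"
    by (intro tendsto_mult LIMSEQ_root_const assms(1)) simp
  hence "eventually (\<lambda>n. root n 2 * root n (real (R adj n)) < \<rho> + \<epsilon>) sequentially"
    using assms(2) by (intro order_tendstoD(2)) auto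
  then obtain N where N: "\<forall>n\<ge>N. root n 2 * root n (real (R adj n)) < \<rho> + \<epsilon>"
    by (auto simp: eventually_sequentially)
  have "\<forall>n\<ge>max N 1. 2 * real (R adj n) \<le> (\<rho> + \<epsilon>) ^ n"
  proof (intro allI impI)
    fix n assume n: "max N 1 \<le> n"
    have r: "root n (2 * real (R adj n)) < \<rho> + \<epsilon>" using N n by (simp add: real_root_mult)
    have "2 * real (R adj n) = root n (2 * real (R adj n)) ^ n"
      using n by (simp add: real_root_pow_pos2)
    also have "\<dots> \<le> (\<rho> + \<epsilon>) ^ n" using r by (intro power_mono) (auto intro: real_root_ge_zero)
    finally show "2 * real (R adj n) \<le> (\<rho> + \<epsilon>) ^ n" .
  qed
  thus ?thesis by (intro exI[of _ "max N 1"]) auto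
qed

theorem mainTheorem7:
  fixes adj :: "'v \<Rightarrow> 'v \<Rightarrow> bool" and \<theta> \<rho> :: real
    and pc :: "('v \<times> 'v) list \<Rightarrow> (nat \<Rightarrow> 'v \<times> 'v)"
  assumes "simple_graph adj" and "connected_graph adj" and "locally_finite adj"
    and "min_degree_2 adj" and "bounded_degree adj"
    and "0 < \<theta>" and "\<theta> < 1"
    and "(\<lambda>n. root n (real (R adj n))) \<longlonglongrightarrow> \<rho>"
    and "valid_choice adj pc"
  shows "\<forall>\<epsilon>>0. \<exists>N. \<forall>n\<ge>N. \<forall>f\<in>Lip adj \<theta>.
     supnorm adj (\<lambda>p. (transfer adj ^^ n) f p - (transfer adj ^^ n) (Pi_op pc n f) p)
        \<le> (\<rho> + \<epsilon>) ^ n * \<theta> ^ n * L1 adj \<theta> f \<and>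
     thetanorm adj \<theta> (\<lambda>p. (transfer adj ^^ n) f p - (transfer adj ^^ n) (Pi_op pc n f) p)
        \<le> (\<rho> + \<epsilon>) ^ n * \<theta> ^ n * L1 adj \<theta> f"
proof (intro allI impI)
  fix \<epsilon> :: real assume "0 < \<epsilon>"
  obtain N where N1: "N \<ge> 1" and N: "\<forall>n\<ge>N. 2 * real (R adj n) \<le> (\<rho> + \<epsilon>) ^ n"
    using lim_lemma[OF assms(8) \<open>0 < \<epsilon>\<close>] by blast
  have th1: "\<theta> \<le> 1" using assms(7) by simp
  show "\<exists>N. \<forall>n\<ge>N. \<forall>f\<in>Lip adj \<theta>.
     supnorm adj (\<lambda>p. (transfer adj ^^ n) f p - (transfer adj ^^ n) (Pi_op pc n f) p)
        \<le> (\<rho> + \<epsilon>) ^ n * \<theta> ^ n * L1 adj \<theta> f \<and>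
     thetanorm adj \<theta> (\<lambda>p. (transfer adj ^^ n) f p - (transfer adj ^^ n) (Pi_op pc n f) p)
        \<le> (\<rho> + \<epsilon>) ^ n * \<theta> ^ n * L1 adj \<theta> f"
  proof (intro exI[of _ N] allI impI ballI)
    fix n f assume n: "N \<le> n" and f: "f \<in> Lip adj \<theta>"
    define g where "g = (\<lambda>p. (transfer adj ^^ n) f p - (transfer adj ^^ n) (Pi_op pc n f) p)"
    define M where "M = real (R adj n) * (\<theta> ^ n * L1 adj \<theta> f)"
    have L0: "0 \<le> L1 adj \<theta> f" by (rule L1_nonneg[OF f assms(6)])
    have tL0: "0 \<le> \<theta> ^ n * L1 adj \<theta> f" using L0 assms(6) by simp
    have M0: "0 \<le> M" unfolding M_def using tL0 by simp
    have n1: "1 \<le> n" using n N1 by simp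
    have cntR: "cnt adj n (p 0) \<le> real (R adj n)" if "p \<in> Paths adj" for p
      using cnt_le_R[OF assms(1,3,5)] that by (auto simp: Paths_def)
    have hypC: "\<forall>q\<in>Paths adj. \<bar>f q - Pi_op pc n f q\<bar> \<le> \<theta> ^ n * L1 adj \<theta> f"
    proof
      fix q assume q: "q \<in> Paths adj"
      define c where "c = prefix n q"
      have cw: "is_walk adj c" using q unfolding c_def is_walk_def prefix_def Paths_def by auto
      have pcc: "pc c \<in> Paths adj" "prefix n (pc c) = c"
        using assms(9) cw unfolding valid_choice_def c_def by (auto simp: prefix_def)
      have ag: "\<forall>i<n. q i = pc c i"
      proof (intro allI impI)
        fix i assume "i < n"
        hence "prefix n q ! i = q i" "prefix n (pc c) ! i = pc c i" by (auto simp: prefix_def)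
        thus "q i = pc c i" using pcc(2) c_def by simp
      qed
      have "\<bar>f q - f (pc c)\<bar> \<le> L1 adj \<theta> f * dtheta \<theta> q (pc c)"
        using L1_use[OF f assms(6) q pcc(1)] ag n1 by simp
      also have "\<dots> \<le> L1 adj \<theta> f * \<theta> ^ n"
        using dtheta_agree[OF assms(6) th1 ag] L0 by (intro mult_left_mono) auto
      finally show "\<bar>f q - Pi_op pc n f q\<bar> \<le> \<theta> ^ n * L1 adj \<theta> f"
        by (simp add: Pi_op_def c_def mult.commute)
    qed
    have gp: "\<bar>g p\<bar> \<le> M" if p: "p \<in> Paths adj" for p
    proof -
      have "\<bar>g p\<bar> \<le> cnt adj n (p 0) * (\<theta> ^ n * L1 adj \<theta> f)"
        unfolding g_def by (rule lemC[OF p hypC])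
      also have "\<dots> \<le> M" unfolding M_def using cntR[OF p] tL0 by (intro mult_right_mono)
      finally show ?thesis .
    qed
    have sup: "supnorm adj g \<le> M"
      unfolding supnorm_def using Paths_ne[OF assms(4)] gp by (intro cSUP_least) auto
    have L1g: "L1 adj \<theta> g \<le> M"
      unfolding L1_def
    proof (rule cSup_least)
      fix x assume "x \<in> {\<bar>g p - g p'\<bar> / dtheta \<theta> p p' | p p'.
      p \<in> Paths adj \<and> p' \<in> Paths adj \<and> p 0 = p' 0 \<and> p \<noteq> p'} \<union> {0}"
      then consider "x = 0" | p p' where "x = \<bar>g p - g p'\<bar> / dtheta \<theta> p p'"
         "p \<in> Paths adj" "p' \<in> Paths adj" "p 0 = p' 0" "p \<noteq> p'" by blast
      thus "x \<le> M"
      proof cases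
        case 1 thus ?thesis using M0 by simp
      next
        case 2
        define k where "k = (LEAST i. p i \<noteq> p' i)"
        obtain j where "p j \<noteq> p' j" using 2(5) by auto
        hence pk: "p k \<noteq> p' k" unfolding k_def by (rule LeastI)
        have ag: "\<forall>i<k. p i = p' i" unfolding k_def using not_less_Least by blast
        have k0: "0 < k" using pk 2(4) by (cases k) auto
        have d: "dtheta \<theta> p p' = \<theta> ^ k" using 2(5) by (simp add: dtheta_def k_def)
        have hf: "\<forall>q\<in>Paths adj. \<forall>q'\<in>Paths adj. (\<forall>i<n+k. q i = q' i) \<longrightarrow>
            \<bar>f q - f q'\<bar> \<le> L1 adj \<theta> f * \<theta> ^ (n+k)"
        proof (intro ballI impI)
          fix q q' assume q: "q \<in> Paths adj" "q' \<in> Paths adj" and a: "\<forall>i<n+k. q i = q' i"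
          have "\<bar>f q - f q'\<bar> \<le> L1 adj \<theta> f * dtheta \<theta> q q'"
            using L1_use[OF f assms(6) q] a k0 by simp
          also have "\<dots> \<le> L1 adj \<theta> f * \<theta> ^ (n+k)"
            using dtheta_agree[OF assms(6) th1 a] L0 by (intro mult_left_mono) auto
          finally show "\<bar>f q - f q'\<bar> \<le> L1 adj \<theta> f * \<theta> ^ (n+k)" .
        qed
        have hP: "\<forall>q\<in>Paths adj. \<forall>q'\<in>Paths adj. (\<forall>i<n+k. q i = q' i) \<longrightarrow>
            \<bar>Pi_op pc n f q - Pi_op pc n f q'\<bar> \<le> 0"
        proof (intro ballI impI)
          fix q q' :: "nat \<Rightarrow> 'v \<times> 'v" assume a: "\<forall>i<n+k. q i = q' i"
          have "prefix n q = prefix n q'" using a by (auto simp: prefix_def)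
          thus "\<bar>Pi_op pc n f q - Pi_op pc n f q'\<bar> \<le> 0" by (simp add: Pi_op_def)
        qed
        have A: "\<bar>(transfer adj ^^ n) f p - (transfer adj ^^ n) f p'\<bar>
            \<le> cnt adj n (p 0) * (L1 adj \<theta> f * \<theta> ^ (n+k))"
          by (rule lemB[OF 2(2,3) k0 ag hf])
        have B: "\<bar>(transfer adj ^^ n) (Pi_op pc n f) p - (transfer adj ^^ n) (Pi_op pc n f) p'\<bar>
            \<le> cnt adj n (p 0) * 0"
          by (rule lemB[OF 2(2,3) k0 ag hP])
        have "\<bar>g p - g p'\<bar> \<le> cnt adj n (p 0) * (L1 adj \<theta> f * \<theta> ^ (n+k))"
          using A B unfolding g_def by simp
        also have "\<dots> \<le> real (R adj n) * (L1 adj \<theta> f * \<theta> ^ (n+k))"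
          using cntR[OF 2(2)] L0 assms(6) by (intro mult_right_mono) auto
        also have "\<dots> = M * \<theta> ^ k" unfolding M_def by (simp add: power_add algebra_simps)
        finally have "\<bar>g p - g p'\<bar> \<le> M * \<theta> ^ k" .
        thus ?thesis using 2(1) d assms(6) by (simp add: pos_divide_le_eq)
      qed
    qed auto
    have RR: "2 * real (R adj n) * (\<theta> ^ n * L1 adj \<theta> f) \<le> (\<rho> + \<epsilon>) ^ n * (\<theta> ^ n * L1 adj \<theta> f)"
      using N n tL0 by (intro mult_right_mono) auto
    have "supnorm adj g \<le> (\<rho> + \<epsilon>) ^ n * \<theta> ^ n * L1 adj \<theta> f"
      using sup RR M0 unfolding M_def by (simp add: algebra_simps)
    moreover have "thetanorm adj \<theta> g \<le> (\<rho> + \<epsilon>) ^ n * \<theta> ^ n * L1 adj \<theta> f"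
      using sup L1g RR unfolding thetanorm_def M_def by (simp add: algebra_simps)
    ultimately show "supnorm adj (\<lambda>p. (transfer adj ^^ n) f p - (transfer adj ^^ n) (Pi_op pc n f) p)
        \<le> (\<rho> + \<epsilon>) ^ n * \<theta> ^ n * L1 adj \<theta> f \<and>
     thetanorm adj \<theta> (\<lambda>p. (transfer adj ^^ n) f p - (transfer adj ^^ n) (Pi_op pc n f) p)
        \<le> (\<rho> + \<epsilon>) ^ n * \<theta> ^ n * L1 adj \<theta> f" unfolding g_def by simp
  qed
qed

end
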